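(* Let $\mathfrak{N}$ be a pseudo-Euclidean 2-step nilpotent Lie algebra with Ricci curvature $\mathfrak{r}$, and suppose there exists $\lambda\in\mathbb{R}$ such that $\mathfrak{r}=\lambda\langle\cdot,\cdot\rangle$. Then $\lambda=0$.
   Context: A pseudo-Euclidean Lie algebra is a finite-dimensional real Lie algebra with a nondegenerate symmetric bilinear form $\langle\cdot,\cdot\rangle$. It is 2-step nilpotent if $0\ne[\mathfrak{N},\mathfrak{N}]\subset\mathfrak{Z}$ (the center). The Levi-Civita product is defined by $2\langle\mathcal{D}_uv,w\rangle=\langle[u,v],w\rangle+\langle[w,u],v\rangle+\langle[w,v],u\rangle$, the curvature by $\mathcal{R}(u,v)w=\mathcal{D}_{[u,v]}w-\mathcal{D}_u\mathcal{D}_vw+\mathcal{D}_v\mathcal{D}_uw$, and the Ricci curvature by $\mathfrak{r}(u,v)=\mathrm{tr}(w\mapsto\mathcal{R}(u,w)v)$. *)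

theory Defs
  imports "HOL-Analysis.Analysis"
begin

text \<open>A finite-dimensional real Lie algebra is modelled on a finite-dimensional real
vector space (type class euclidean_space; its inner product is only used to
compute traces, which are basis independent) with a Lie bracket.\<close>

definition lie_algebra :: "('a::euclidean_space \<Rightarrow> 'a \<Rightarrow> 'a) \<Rightarrow> bool" where
  "lie_algebra br \<longleftrightarrow> bilinear br \<and> (\<forall>u. br u u = 0) \<and>
     (\<forall>u v w. br u (br v w) + br v (br w u) + br w (br u v) = 0)"

definition pseudo_euclidean_form :: "('a::euclidean_space \<Rightarrow> 'a \<Rightarrow> real) \<Rightarrow> bool" where
  "pseudo_euclidean_form g \<longleftrightarrow> bilinear g \<and> (\<forall>u v. g u v = g v u) \<and>
     (\<forall>u. (\<forall>v. g u v = 0) \<longrightarrow> u = 0)"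

definition center :: "('a::euclidean_space \<Rightarrow> 'a \<Rightarrow> 'a) \<Rightarrow> 'a set" where
  "center br = {z. \<forall>u. br z u = 0}"

definition two_step_nilpotent :: "('a::euclidean_space \<Rightarrow> 'a \<Rightarrow> 'a) \<Rightarrow> bool" where
  "two_step_nilpotent br \<longleftrightarrow> (\<exists>u v. br u v \<noteq> 0) \<and> (\<forall>u v. br u v \<in> center br)"

definition levi_civita :: "('a::euclidean_space \<Rightarrow> 'a \<Rightarrow> 'a) \<Rightarrow> ('a \<Rightarrow> 'a \<Rightarrow> real) \<Rightarrow> 'a \<Rightarrow> 'a \<Rightarrow> 'a" where
  "levi_civita br g u v = (THE x. \<forall>w. 2 * g x w = g (br u v) w + g (br w u) v + g (br w v) u)"

definition curvature :: "('a::euclidean_space \<Rightarrow> 'a \<Rightarrow> 'a) \<Rightarrow> ('a \<Rightarrow> 'a \<Rightarrow> real) \<Rightarrow> 'a \<Rightarrow> 'a \<Rightarrow> 'a \<Rightarrow> 'a" where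
  "curvature br g u v w =
     (let D = levi_civita br g in D (br u v) w - D u (D v w) + D v (D u w))"

definition trace_map :: "('a::euclidean_space \<Rightarrow> 'a) \<Rightarrow> real" where
  "trace_map f = (\<Sum>b\<in>Basis. inner (f b) b)"

definition ricci :: "('a::euclidean_space \<Rightarrow> 'a \<Rightarrow> 'a) \<Rightarrow> ('a \<Rightarrow> 'a \<Rightarrow> real) \<Rightarrow> 'a \<Rightarrow> 'a \<Rightarrow> real" where
  "ricci br g u v = trace_map (\<lambda>w. curvature br g u w v)"

end

theory Submission
  imports Defs
begin

section \<open>Trace lemmas\<close>

lemma tr_add: "trace_map (\<lambda>w. f w + h w) = trace_map f + trace_map h"
  by (simp add: trace_map_def inner_add_left sum.distrib)

lemma tr_diff: "trace_map (\<lambda>w. f w - h w) = trace_map f - trace_map h"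
  by (simp add: trace_map_def inner_diff_left sum_subtractf)

lemma tr_scale: "trace_map (\<lambda>w. c *\<^sub>R f w) = c * trace_map f"
  by (simp add: trace_map_def sum_distrib_left)

lemma tr_neg: "trace_map (\<lambda>w. - f w) = - trace_map f"
  by (simp add: trace_map_def sum_negf)

lemma tr_zero: "trace_map (\<lambda>w. 0) = 0"
  by (simp add: trace_map_def)

lemma tr_id: "trace_map (\<lambda>w::'a::euclidean_space. w) = real DIM('a)"
  by (simp add: trace_map_def)

lemma lin_expand:
  fixes A :: "'a::euclidean_space \<Rightarrow> 'b::euclidean_space"
  assumes "linear A"
  shows "A x = (\<Sum>c\<in>Basis. (x \<bullet> c) *\<^sub>R A c)"
proof -
  have "A x = A (\<Sum>c\<in>Basis. (x \<bullet> c) *\<^sub>R c)" by (simp add: euclidean_representation)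
  also have "\<dots> = (\<Sum>c\<in>Basis. (x \<bullet> c) *\<^sub>R A c)"
    using assms by (simp add: linear_sum linear_scale)
  finally show ?thesis .
qed

lemma tr_comm:
  fixes A B :: "'a::euclidean_space \<Rightarrow> 'a"
  assumes "linear A" "linear B"
  shows "trace_map (\<lambda>w. A (B w)) = trace_map (\<lambda>w. B (A w))"
proof -
  have "trace_map (\<lambda>w. A (B w)) = (\<Sum>b\<in>Basis. \<Sum>c\<in>Basis. (B b \<bullet> c) * (A c \<bullet> b))"
    unfolding trace_map_def
    by (subst lin_expand[OF assms(1)]) (simp add: inner_sum_left)
  also have "\<dots> = (\<Sum>c\<in>Basis. \<Sum>b\<in>Basis. (B b \<bullet> c) * (A c \<bullet> b))"
    by (rule sum.swap)
  also have "\<dots> = trace_map (\<lambda>w. B (A w))"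
    unfolding trace_map_def
    by (subst lin_expand[OF assms(2)]) (simp add: inner_sum_left mult.commute)
  finally show ?thesis .
qed

lemma proj_exists:
  fixes S :: "'a::euclidean_space set"
  obtains P where "linear P" "\<And>x. P x \<in> span S" "\<And>x. x \<in> span S \<Longrightarrow> P x = x"
    "trace_map P \<ge> 0"
proof -
  obtain T where T: "0 \<notin> T" "T \<subseteq> span S" "pairwise orthogonal T" "span T = span S"
    using orthogonal_basis_subspace[OF subspace_span[of S]] by metis
  have fin: "finite T" using T(3) pairwise_orthogonal_imp_finite by blast
  define P where "P x = (\<Sum>b\<in>T. (b \<bullet> x / (b \<bullet> b)) *\<^sub>R b)" for x
  have lin: "linear P"
    unfolding P_def
    by (rule linearI) (simp_all add: inner_add_right add_divide_distrib scaleR_add_left sum.distrib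
        scaleR_sum_right)
  have sp: "P x \<in> span S" for x
    unfolding P_def using T(2) by (simp add: span_mul span_sum subsetD)
  have fx: "P x = x" if x: "x \<in> span S" for x
  proof -
    have o: "orthogonal y (x - P x)" if "y \<in> span T" for y
      using Gram_Schmidt_step[OF T(3) that] unfolding P_def by simp
    have "x - P x \<in> span T" using x sp T(4) by (simp add: span_diff)
    then have "orthogonal (x - P x) (x - P x)" using o by blast
    then show ?thesis by (simp add: orthogonal_def)
  qed
  have "trace_map P = (\<Sum>c\<in>Basis. \<Sum>b\<in>T. (b \<bullet> c) * (b \<bullet> c) / (b \<bullet> b))"
    unfolding trace_map_def P_def
    by (simp add: inner_sum_left)
  also have "\<dots> \<ge> 0"
    by (intro sum_nonneg divide_nonneg_nonneg) auto
  finally show ?thesis using that lin sp fx by blast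
qed

lemma lin_fix_span:
  assumes "linear E" "\<And>y. y \<in> S \<Longrightarrow> E y = y" "x \<in> span S"
  shows "E x = x"
proof -
  have "linear (\<lambda>x. E x - x)" using assms(1) by (intro linearI) (auto simp: linear_add linear_scale algebra_simps)
  from real_vector.linear_eq_0_on_span[OF this _ assms(3)] assms(2) show ?thesis by simp
qed

lemma tr_idem_nonneg:
  fixes E :: "'a::euclidean_space \<Rightarrow> 'a"
  assumes "linear E" "\<And>x. E (E x) = E x"
  shows "trace_map E \<ge> 0"
proof -
  obtain P where P: "linear P" "\<And>x. P x \<in> span (range E)"
    "\<And>x. x \<in> span (range E) \<Longrightarrow> P x = x" "trace_map P \<ge> 0"
    using proj_exists by blast
  have "trace_map E = trace_map (\<lambda>w. P (E w))"
    using P(3) by (simp add: span_base)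
  also have "\<dots> = trace_map (\<lambda>w. E (P w))" by (rule tr_comm[OF P(1) assms(1)])
  also have "\<dots> = trace_map P"
  proof -
    have "E (P w) = P w" for w
      by (rule lin_fix_span[OF assms(1) _ P(2)]) (auto simp: assms(2))
    then show ?thesis by simp
  qed
  finally show ?thesis using P(4) by simp
qed

lemma lin_zero_span:
  assumes "linear E" "\<And>y. y \<in> S \<Longrightarrow> E y = 0" "x \<in> span S"
  shows "E x = 0"
  using real_vector.linear_eq_0_on_span[OF assms(1) _ assms(3)] assms(2) by blast

lemma tr_sqzero:
  fixes X :: "'a::euclidean_space \<Rightarrow> 'a"
  assumes "linear X" "\<And>x. X (X x) = 0"
  shows "trace_map X = 0"
proof -
  obtain P where P: "linear P" "\<And>x. P x \<in> span (range X)"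
    "\<And>x. x \<in> span (range X) \<Longrightarrow> P x = x"
    using proj_exists by blast
  have "trace_map X = trace_map (\<lambda>w. P (X w))"
    using P(3) by (simp add: span_base)
  also have "\<dots> = trace_map (\<lambda>w. X (P w))" by (rule tr_comm[OF P(1) assms(1)])
  also have "\<dots> = 0"
  proof -
    have "X (P w) = 0" for w
      by (rule lin_zero_span[OF assms(1) _ P(2)]) (auto simp: assms(2))
    then show ?thesis by (simp add: tr_zero)
  qed
  finally show ?thesis .
qed

locale pe =
  fixes br :: "'a::euclidean_space \<Rightarrow> 'a \<Rightarrow> 'a" and g :: "'a \<Rightarrow> 'a \<Rightarrow> real"
  assumes bbr: "bilinear br" and sk: "\<And>u. br u u = 0" and bg: "bilinear g"
    and gsym: "\<And>u v. g u v = g v u" and nd: "\<And>u. (\<forall>v. g u v = 0) \<Longrightarrow> u = 0"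
    and nil: "\<And>u v w. br (br u v) w = 0"
begin

lemma lin_br2: "linear (br u)" using bbr by (simp add: bilinear_def)
lemma lin_br1: "linear (\<lambda>u. br u v)" using bbr by (simp add: bilinear_def)
lemma lin_g2: "linear (g u)" using bg by (simp add: bilinear_def)
lemma lin_g1: "linear (\<lambda>u. g u v)" using bg by (simp add: bilinear_def)

lemma br_add1 [simp]: "br (x + y) z = br x z + br y z" by (rule bilinear_ladd[OF bbr])
lemma br_add2 [simp]: "br z (x + y) = br z x + br z y" by (rule bilinear_radd[OF bbr])
lemma br_diff1 [simp]: "br (x - y) z = br x z - br y z" by (rule bilinear_lsub[OF bbr])
lemma br_diff2 [simp]: "br z (x - y) = br z x - br z y" by (rule bilinear_rsub[OF bbr])
lemma br_scale1 [simp]: "br (c *\<^sub>R x) z = c *\<^sub>R br x z" by (rule bilinear_lmul[OF bbr])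
lemma br_scale2 [simp]: "br z (c *\<^sub>R x) = c *\<^sub>R br z x" by (rule bilinear_rmul[OF bbr])
lemma br_neg1 [simp]: "br (- x) z = - br x z" by (rule bilinear_lneg[OF bbr])
lemma br_neg2 [simp]: "br z (- x) = - br z x" by (rule bilinear_rneg[OF bbr])
lemma br_zero1 [simp]: "br 0 z = 0" by (rule bilinear_lzero[OF bbr])
lemma br_zero2 [simp]: "br z 0 = 0" by (rule bilinear_rzero[OF bbr])

lemma g_add1 [simp]: "g (x + y) z = g x z + g y z" by (rule bilinear_ladd[OF bg])
lemma g_add2 [simp]: "g z (x + y) = g z x + g z y" by (rule bilinear_radd[OF bg])
lemma g_diff1 [simp]: "g (x - y) z = g x z - g y z" by (rule bilinear_lsub[OF bg])
lemma g_diff2 [simp]: "g z (x - y) = g z x - g z y" by (rule bilinear_rsub[OF bg])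
lemma g_scale1 [simp]: "g (c *\<^sub>R x) z = c * g x z" using bilinear_lmul[OF bg] by simp
lemma g_scale2 [simp]: "g z (c *\<^sub>R x) = c * g z x" using bilinear_rmul[OF bg] by simp
lemma g_neg1 [simp]: "g (- x) z = - g x z" by (rule bilinear_lneg[OF bg])
lemma g_neg2 [simp]: "g z (- x) = - g z x" by (rule bilinear_rneg[OF bg])
lemma g_zero1 [simp]: "g 0 z = 0" by (rule bilinear_lzero[OF bg])
lemma g_zero2 [simp]: "g z 0 = 0" by (rule bilinear_rzero[OF bg])

lemma br_anti: "br u v = - br v u"
proof -
  have "0 = br (u + v) (u + v)" by (simp only: sk)
  also have "\<dots> = br u u + br u v + (br v u + br v v)" by (simp add: add.assoc)
  also have "\<dots> = br u v + br v u" by (simp only: sk add_0_left add_0_right)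
  finally have "br u v + br v u = 0" by simp
  then show ?thesis by (simp add: eq_neg_iff_add_eq_0)
qed

lemma nil2 [simp]: "br u (br v w) = 0"
  using nil[of v w u] br_anti[of u "br v w"] by simp

lemma nil1 [simp]: "br (br u v) w = 0" by (rule nil)

lemma g_eqI: assumes "\<And>w. g x w = g y w" shows "x = y"
proof -
  have "\<forall>w. g (x - y) w = 0" using assms by simp
  then show ?thesis using nd by fastforce
qed

definition Gm :: "'a \<Rightarrow> 'a" where "Gm x = (\<Sum>b\<in>Basis. g x b *\<^sub>R b)"

lemma g_Gm: "g x y = Gm x \<bullet> y"
proof -
  have "g x y = g x (\<Sum>b\<in>Basis. (y \<bullet> b) *\<^sub>R b)" by (simp add: euclidean_representation)
  also have "\<dots> = (\<Sum>b\<in>Basis. (y \<bullet> b) * g x b)"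
    by (simp add: linear_sum[OF lin_g2])
  also have "\<dots> = (\<Sum>b\<in>Basis. g x b * (b \<bullet> y))"
    by (intro sum.cong refl) (simp add: inner_commute)
  also have "\<dots> = Gm x \<bullet> y" by (simp add: Gm_def inner_sum_left)
  finally show ?thesis .
qed

lemma lin_Gm: "linear Gm"
  by (rule linearI) (simp_all add: Gm_def scaleR_add_left sum.distrib scaleR_sum_right)

lemma inj_Gm: "inj Gm"
proof (rule injI)
  fix x y assume "Gm x = Gm y"
  then show "x = y" by (intro g_eqI) (simp add: g_Gm)
qed

definition Hm :: "'a \<Rightarrow> 'a" where
  "Hm = (SOME H. linear H \<and> (\<forall>x. H (Gm x) = x) \<and> (\<forall>x. Gm (H x) = x))"

lemma Hm_props: "linear Hm" "\<And>x. Hm (Gm x) = x" "\<And>x. Gm (Hm x) = x"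
proof -
  have "\<exists>H. linear H \<and> (\<forall>x. H (Gm x) = x) \<and> (\<forall>x. Gm (H x) = x)"
    using linear_injective_isomorphism[OF lin_Gm inj_Gm] by simp
  then have "linear Hm \<and> (\<forall>x. Hm (Gm x) = x) \<and> (\<forall>x. Gm (Hm x) = x)"
    unfolding Hm_def by (rule someI_ex)
  then show "linear Hm" "\<And>x. Hm (Gm x) = x" "\<And>x. Gm (Hm x) = x" by auto
qed

lemma g_Hm1 [simp]: "g (Hm x) y = x \<bullet> y" by (simp add: g_Gm Hm_props)
lemma g_Hm2 [simp]: "g y (Hm x) = y \<bullet> x" by (simp add: gsym[of y] inner_commute)

lemma Gm_sym: "Gm x \<bullet> y = x \<bullet> Gm y"
  using gsym[of x y] by (simp add: g_Gm inner_commute)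

lemma tr_adj:
  assumes X: "linear X" and Y: "linear Y" and adj: "\<And>a b. g (Y a) b = g a (X b)"
  shows "trace_map Y = trace_map X"
proof -
  have "trace_map Y = (\<Sum>b\<in>Basis. g (Y b) (Hm b))" by (simp add: trace_map_def)
  also have "\<dots> = (\<Sum>b\<in>Basis. Gm (X (Hm b)) \<bullet> b)"
  proof (intro sum.cong refl)
    fix b
    have "g (Y b) (Hm b) = g b (X (Hm b))" by (rule adj)
    also have "\<dots> = Gm b \<bullet> X (Hm b)" by (rule g_Gm)
    also have "\<dots> = Gm (X (Hm b)) \<bullet> b" by (simp add: Gm_sym inner_commute)
    finally show "g (Y b) (Hm b) = Gm (X (Hm b)) \<bullet> b" .
  qed
  also have "\<dots> = trace_map (\<lambda>b. Gm (X (Hm b)))" by (simp add: trace_map_def)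
  also have "\<dots> = trace_map (\<lambda>b. X (Hm (Gm b)))"
    using tr_comm[OF lin_Gm, of "\<lambda>b. X (Hm b)"] X Hm_props(1)
    by (simp add: linear_compose[unfolded o_def])
  also have "\<dots> = trace_map X" by (simp add: Hm_props)
  finally show ?thesis .
qed

definition jj :: "'a \<Rightarrow> 'a \<Rightarrow> 'a" where "jj u a = Hm (adjoint (br a) (Gm u))"

lemma jj_g [simp]: "g (jj u a) b = g u (br a b)"
  unfolding jj_def g_Hm1
  using adjoint_works[OF lin_br2, of b a "Gm u"] by (simp add: g_Gm inner_commute)

lemma jj_add1 [simp]: "jj (x + y) z = jj x z + jj y z" by (rule g_eqI) simp
lemma jj_add2 [simp]: "jj z (x + y) = jj z x + jj z y" by (rule g_eqI) simp
lemma jj_diff1 [simp]: "jj (x - y) z = jj x z - jj y z" by (rule g_eqI) simp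
lemma jj_diff2 [simp]: "jj z (x - y) = jj z x - jj z y" by (rule g_eqI) simp
lemma jj_scale1 [simp]: "jj (c *\<^sub>R x) z = c *\<^sub>R jj x z" by (rule g_eqI) simp
lemma jj_scale2 [simp]: "jj z (c *\<^sub>R x) = c *\<^sub>R jj z x" by (rule g_eqI) simp
lemma jj_neg1 [simp]: "jj (- x) z = - jj x z" by (rule g_eqI) simp
lemma jj_neg2 [simp]: "jj z (- x) = - jj z x" by (rule g_eqI) simp
lemma jj_zero1 [simp]: "jj 0 z = 0" by (rule g_eqI) simp
lemma jj_zero2 [simp]: "jj z 0 = 0" by (rule g_eqI) simp

lemma lin_jj2: "linear (jj u)" by (rule linearI) simp_all
lemma lin_jj1: "linear (\<lambda>u. jj u a)" by (rule linearI) simp_all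

lemma jj_central2 [simp]: "jj u (br x y) = 0" by (rule g_eqI) simp

lemma jj_skew: "g (jj u a) b = - g (jj u b) a"
  by (simp add: br_anti[of a b])

definition lc :: "'a \<Rightarrow> 'a \<Rightarrow> 'a" where
  "lc u v = (1/2) *\<^sub>R (br u v - jj v u - jj u v)"

lemma lc_prop: "2 * g (lc u v) w = g (br u v) w + g (br w u) v + g (br w v) u"
  unfolding lc_def
  by (simp add: gsym[of v] gsym[of u] br_anti[of w u] br_anti[of w v] algebra_simps)

lemma levi_eq: "levi_civita br g = lc"
proof (intro ext)
  fix u v
  show "levi_civita br g u v = lc u v"
    unfolding levi_civita_def
  proof (rule the_equality)
    show "\<forall>w. 2 * g (lc u v) w = g (br u v) w + g (br w u) v + g (br w v) u"
      using lc_prop by blast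
    fix x assume "\<forall>w. 2 * g x w = g (br u v) w + g (br w u) v + g (br w v) u"
    then have "\<And>w. g x w = g (lc u v) w" using lc_prop by (metis mult_left_cancel zero_neq_numeral)
    then show "x = lc u v" by (rule g_eqI)
  qed
qed

lemma jj_jj [simp]: "jj (jj a b) c = 0" by (rule g_eqI) simp

lemma curv_expand:
  "curvature br g u w v = -(1/2) *\<^sub>R jj (br u w) v
     - (1/4) *\<^sub>R (- br u (jj v w) - br u (jj w v) - jj (br w v) u + jj u (jj v w) + jj u (jj w v))
     + (1/2) *\<^sub>R (br w (lc u v) - jj (lc u v) w - jj w (lc u v))"
  unfolding curvature_def Let_def levi_eq
  by (simp add: lc_def algebra_simps)

definition Qf :: "'a \<Rightarrow> 'a \<Rightarrow> real" where "Qf u v = trace_map (\<lambda>w. jj (br u w) v)"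
definition Tf :: "'a \<Rightarrow> 'a \<Rightarrow> real" where "Tf u v = trace_map (\<lambda>w. jj u (jj v w))"

lemma t_b1: "trace_map (\<lambda>w. br u (jj v w)) = 0"
  using tr_comm[OF lin_br2 lin_jj2, of u v] by (simp add: tr_zero)

lemma t_b2: "trace_map (\<lambda>w. br u (jj w v)) = Qf u v"
  using tr_comm[OF lin_br2 lin_jj1, of u v] by (simp add: Qf_def)

lemma t_b3: "trace_map (\<lambda>w. jj (br w v) u) = - Qf v u"
proof -
  have "trace_map (\<lambda>w. jj (br w v) u) = trace_map (\<lambda>w. - jj (br v w) u)"
    by (simp add: br_anti[of _ v])
  then show ?thesis by (simp add: tr_neg Qf_def)
qed

lemma t_b6: "trace_map (\<lambda>w. jj u (jj v w)) = Tf u v" by (simp add: Tf_def)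

lemma t_b7: "trace_map (\<lambda>w. jj u (jj w v)) = 0"
proof -
  have lX: "linear (\<lambda>b. - br v (jj u b))"
    by (rule linearI) simp_all
  have lY: "linear (\<lambda>w. jj u (jj w v))"
    by (rule linearI) simp_all
  have "trace_map (\<lambda>w. jj u (jj w v)) = trace_map (\<lambda>b. - br v (jj u b))"
  proof (rule tr_adj[OF lX lY])
    fix a b
    have "g (jj u (jj a v)) b = - g (jj u b) (jj a v)" by (rule jj_skew)
    also have "\<dots> = - g (jj a v) (jj u b)" by (simp add: gsym)
    also have "\<dots> = g a (- br v (jj u b))" by simp
    finally show "g (jj u (jj a v)) b = g a (- br v (jj u b))" .
  qed
  also have "\<dots> = 0" using t_b1[of v u] by (simp add: tr_neg)
  finally show ?thesis .
qed

lemma t_a2: "trace_map (\<lambda>w. br w y) = 0"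
proof -
  have "trace_map (\<lambda>w. br w y) = trace_map (\<lambda>w. - br y w)" by (simp add: br_anti[of _ y])
  also have "\<dots> = - trace_map (br y)" by (simp add: tr_neg)
  also have "trace_map (br y) = 0" by (rule tr_sqzero[OF lin_br2]) simp
  finally show ?thesis by simp
qed

lemma t_a3: "trace_map (\<lambda>w. jj y w) = 0"
proof -
  have lX: "linear (\<lambda>b. - jj y b)" using lin_jj2[of y] by (simp add: linear_compose_neg)
  have "trace_map (\<lambda>w. jj y w) = trace_map (\<lambda>b. - jj y b)"
  proof (rule tr_adj[OF lX lin_jj2])
    fix a b
    show "g (jj y a) b = g a (- jj y b)"
      by (simp add: gsym[of a] br_anti[of b a])
  qed
  then show ?thesis by (simp add: tr_neg)
qed

lemma t_a4: "trace_map (\<lambda>w. jj w y) = 0"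
proof -
  have "trace_map (\<lambda>w. jj w y) = trace_map (br y)"
    by (rule tr_adj[OF lin_br2 lin_jj1]) simp
  also have "trace_map (br y) = 0" by (rule tr_sqzero[OF lin_br2]) simp
  finally show ?thesis .
qed

lemma ric_formula: "ricci br g u v = -(1/4) * (Qf u v + Qf v u + Tf u v)"
proof -
  have "ricci br g u v = trace_map (\<lambda>w. -(1/2) *\<^sub>R jj (br u w) v
     - (1/4) *\<^sub>R (- br u (jj v w) - br u (jj w v) - jj (br w v) u + jj u (jj v w) + jj u (jj w v))
     + (1/2) *\<^sub>R (br w (lc u v) - jj (lc u v) w - jj w (lc u v)))"
    unfolding ricci_def curv_expand ..
  also have "\<dots> = -(1/2) * Qf u v - (1/4) * (- 0 - Qf u v - (- Qf v u) + Tf u v + 0)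
      + (1/2) * (0 - 0 - 0)"
    by (simp only: tr_add tr_diff tr_scale tr_neg t_b1 t_b2 t_b3 t_b6 t_b7 t_a2 t_a3 t_a4
        Qf_def[symmetric])
  finally show ?thesis by (simp add: algebra_simps)
qed

definition Om :: "'a \<Rightarrow> 'a" where "Om u = (\<Sum>c\<in>Basis. br c (jj u (Hm c)))"

lemma br_sum1: "br (sum f S) w = (\<Sum>a\<in>S. br (f a) w)"
  using linear_sum[OF lin_br1[of w], of f S] by simp

lemma g_sum2: "g v (sum f S) = (\<Sum>a\<in>S. g v (f a))"
  using linear_sum[OF lin_g2[of v], of f S] by simp

lemma lin_Om: "linear Om"
  by (rule linearI) (simp_all add: Om_def sum.distrib scaleR_sum_right)

lemma Om_central [simp]: "br (Om u) w = 0"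
  by (simp add: Om_def br_sum1)

lemma jj_central1: assumes "\<And>b. br x b = 0" shows "jj a x = 0"
  by (rule g_eqI) (simp add: assms)

lemma g_Om: "g (Om u) v = - Tf u v"
proof -
  have "Tf u v = (\<Sum>c\<in>Basis. g (jj u (jj v c)) (Hm c))"
    by (simp add: Tf_def trace_map_def)
  also have "\<dots> = (\<Sum>c\<in>Basis. - g v (br c (jj u (Hm c))))"
  proof (intro sum.cong refl)
    fix c
    have "g (jj u (jj v c)) (Hm c) = - g (jj u (Hm c)) (jj v c)" by (rule jj_skew)
    also have "\<dots> = - g (jj v c) (jj u (Hm c))" by (simp add: gsym)
    also have "\<dots> = - g v (br c (jj u (Hm c)))" by (simp only: jj_g)
    finally show "g (jj u (jj v c)) (Hm c) = - g v (br c (jj u (Hm c)))" .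
  qed
  also have "\<dots> = - g v (Om u)" by (simp add: Om_def g_sum2 sum_negf)
  finally show ?thesis by (simp add: gsym)
qed

lemma Q_Om1: "Qf (Om x) v = 0" by (simp add: Qf_def tr_zero)

lemma Q_Om2: "Qf v (Om x) = 0"
proof -
  have "jj (br v w) (Om x) = 0" for w by (rule jj_central1) simp
  then show ?thesis by (simp add: Qf_def tr_zero)
qed

lemma Q_sym: "Qf u v = Qf v u"
  unfolding Qf_def
proof (rule tr_adj)
  show "linear (\<lambda>w. jj (br v w) u)" by (rule linearI) simp_all
  show "linear (\<lambda>w. jj (br u w) v)" by (rule linearI) simp_all
  fix a b
  show "g (jj (br u a) v) b = g a (jj (br v b) u)"
    by (simp add: gsym[of a] gsym[of "br u a"])
qed

lemma sum_T: "(\<Sum>b\<in>Basis. Tf b (Hm b)) = - trace_map Om"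
proof -
  have "Tf b (Hm b) = - (Om b \<bullet> b)" for b
    using g_Om[of b "Hm b"] by simp
  then show ?thesis by (simp add: trace_map_def sum_negf)
qed

lemma g_expand: "g y x = (\<Sum>b\<in>Basis. (b \<bullet> y) * g b x)"
proof -
  have "g y x = g (\<Sum>b\<in>Basis. (y \<bullet> b) *\<^sub>R b) x" by (simp add: euclidean_representation)
  also have "\<dots> = (\<Sum>b\<in>Basis. (b \<bullet> y) * g b x)"
    using linear_sum[OF lin_g1[of x], of "\<lambda>b. (y \<bullet> b) *\<^sub>R b" Basis] by (simp add: inner_commute)
  finally show ?thesis .
qed

lemma Q_expand: "Qf u v = (\<Sum>c\<in>Basis. g (br u c) (br v (Hm c)))"
proof -
  have "Qf u v = (\<Sum>c\<in>Basis. jj (br u c) v \<bullet> c)" by (simp add: Qf_def trace_map_def)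
  also have "\<dots> = (\<Sum>c\<in>Basis. g (br u c) (br v (Hm c)))"
  proof (intro sum.cong refl)
    fix c
    have "jj (br u c) v \<bullet> c = g (jj (br u c) v) (Hm c)" by (simp only: g_Hm2)
    also have "\<dots> = g (br u c) (br v (Hm c))" by (simp only: jj_g)
    finally show "jj (br u c) v \<bullet> c = g (br u c) (br v (Hm c))" .
  qed
  finally show ?thesis .
qed

lemma sum_Q: "(\<Sum>b\<in>Basis. Qf b (Hm b)) = trace_map Om"
proof -
  have "trace_map Om = (\<Sum>b\<in>Basis. \<Sum>c\<in>Basis. br c (jj b (Hm c)) \<bullet> b)"
    by (simp add: trace_map_def Om_def inner_sum_left)
  also have "\<dots> = (\<Sum>b\<in>Basis. \<Sum>c\<in>Basis. \<Sum>d\<in>Basis.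
      (b \<bullet> br c d) * g b (br (Hm c) (Hm d)))"
  proof (intro sum.cong refl)
    fix b c
    define z where "z = jj b (Hm c)"
    have "br c z \<bullet> b = g (br c z) (Hm b)" by (simp only: g_Hm2)
    also have "\<dots> = g (jj (Hm b) c) z" by (simp only: gsym[of "br c z"] jj_g)
    also have "\<dots> = g (jj (Hm b) c) (\<Sum>d\<in>Basis. (z \<bullet> d) *\<^sub>R d)"
      by (simp add: euclidean_representation)
    also have "\<dots> = (\<Sum>d\<in>Basis. (z \<bullet> d) * g (jj (Hm b) c) d)"
      by (simp add: g_sum2)
    also have "\<dots> = (\<Sum>d\<in>Basis. (b \<bullet> br c d) * g b (br (Hm c) (Hm d)))"
    proof (intro sum.cong refl)
      fix d
      have 1: "z \<bullet> d = g b (br (Hm c) (Hm d))"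
      proof -
        have "z \<bullet> d = g z (Hm d)" by (simp only: g_Hm2)
        also have "\<dots> = g b (br (Hm c) (Hm d))" unfolding z_def by (simp only: jj_g)
        finally show ?thesis .
      qed
      have 2: "g (jj (Hm b) c) d = b \<bullet> br c d" by (simp only: jj_g g_Hm1)
      show "(z \<bullet> d) * g (jj (Hm b) c) d = (b \<bullet> br c d) * g b (br (Hm c) (Hm d))"
        by (simp only: 1 2 mult.commute)
    qed
    finally show "br c (jj b (Hm c)) \<bullet> b =
      (\<Sum>d\<in>Basis. (b \<bullet> br c d) * g b (br (Hm c) (Hm d)))" unfolding z_def .
  qed
  also have "\<dots> = (\<Sum>c\<in>Basis. \<Sum>d\<in>Basis. \<Sum>b\<in>Basis.
      (b \<bullet> br c d) * g b (br (Hm c) (Hm d)))"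
    by (subst sum.swap, rule sum.cong[OF refl], rule sum.swap)
  also have "\<dots> = (\<Sum>c\<in>Basis. \<Sum>d\<in>Basis. g (br c d) (br (Hm c) (Hm d)))"
    by (simp only: g_expand[symmetric])
  also have "\<dots> = (\<Sum>b\<in>Basis. Qf b (Hm b))"
    by (simp only: Q_expand)
  finally show ?thesis ..
qed

lemma main_pe:
  assumes ric: "\<forall>u v. ricci br g u v = lam * g u v"
  shows "lam = 0"
proof (rule ccontr)
  assume lam0: "lam \<noteq> 0"
  have OmOm: "Om (Om x) = (4 * lam) *\<^sub>R Om x" for x
  proof (rule g_eqI)
    fix v
    have "ricci br g (Om x) v = (1/4) * g (Om (Om x)) v"
      by (simp add: ric_formula Q_Om1 Q_Om2 g_Om)
    moreover have "ricci br g (Om x) v = lam * g (Om x) v" using ric by blast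
    ultimately show "g (Om (Om x)) v = g ((4 * lam) *\<^sub>R Om x) v" by simp
  qed
  have s1: "(\<Sum>b\<in>Basis. ricci br g b (Hm b)) = lam * real DIM('a)"
  proof -
    have "ricci br g b (Hm b) = lam" if "b \<in> Basis" for b
      using ric that by simp
    then show ?thesis by (simp add: mult.commute)
  qed
  have s2: "(\<Sum>b\<in>Basis. ricci br g b (Hm b)) = -(1/4) * trace_map Om"
  proof -
    have "(\<Sum>b\<in>Basis. ricci br g b (Hm b)) =
      -(1/4) * ((\<Sum>b\<in>Basis. Qf b (Hm b)) + (\<Sum>b\<in>Basis. Qf b (Hm b)) + (\<Sum>b\<in>Basis. Tf b (Hm b)))"
    proof -
      have "ricci br g b (Hm b) = -(1/4) * (Qf b (Hm b) + Qf b (Hm b) + Tf b (Hm b))" for b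
        using ric_formula[of b "Hm b"] Q_sym[of "Hm b" b] by simp
      then have "(\<Sum>b\<in>Basis. ricci br g b (Hm b)) =
          (\<Sum>b\<in>Basis. -(1/4) * (Qf b (Hm b) + Qf b (Hm b) + Tf b (Hm b)))" by simp
      also have "\<dots> = -(1/4) * (\<Sum>b\<in>Basis. (Qf b (Hm b) + Qf b (Hm b) + Tf b (Hm b)))"
        by (rule sum_distrib_left[symmetric])
      also have "\<dots> = -(1/4) * ((\<Sum>b\<in>Basis. Qf b (Hm b)) + (\<Sum>b\<in>Basis. Qf b (Hm b)) + (\<Sum>b\<in>Basis. Tf b (Hm b)))"
        by (simp only: sum.distrib)
      finally show ?thesis .
    qed
    also have "\<dots> = -(1/4) * trace_map Om" by (simp add: sum_Q sum_T)
    finally show ?thesis .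
  qed
  define c where "c = 1 / (4 * lam)"
  have c4: "c * (4 * lam) = 1" using lam0 by (simp add: c_def)
  define E where "E x = c *\<^sub>R Om x" for x
  have linE: "linear E" unfolding E_def using lin_Om by (simp add: linear_compose_scale_right)
  have idE: "E (E x) = E x" for x
  proof -
    have "E (E x) = c *\<^sub>R (c *\<^sub>R Om (Om x))" unfolding E_def using lin_Om by (simp add: linear_scale)
    also have "\<dots> = (c * (4 * lam)) *\<^sub>R (c *\<^sub>R Om x)" by (simp add: OmOm)
    also have "\<dots> = E x" by (simp add: c4 E_def)
    finally show ?thesis .
  qed
  have "trace_map E \<ge> 0" by (rule tr_idem_nonneg[OF linE idE])
  moreover have "trace_map E = c * trace_map Om" unfolding E_def by (rule tr_scale)
  moreover have "trace_map Om = - (4 * lam) * real DIM('a)" using s1 s2 by simp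
  ultimately have "0 \<le> - (c * (4 * lam)) * real DIM('a)" by simp
  then have "0 \<le> - real DIM('a)" by (simp add: c4)
  moreover have "DIM('a) > 0" by simp
  ultimately show False by simp
qed

end

theorem mainTheorem6:
  fixes br :: "'a::euclidean_space \<Rightarrow> 'a \<Rightarrow> 'a" and g :: "'a \<Rightarrow> 'a \<Rightarrow> real" and lam :: real
  assumes "lie_algebra br"
    and "pseudo_euclidean_form g"
    and "two_step_nilpotent br"
    and "\<forall>u v. ricci br g u v = lam * g u v"
  shows "lam = 0"
proof -
  interpret pe br g
  proof
    show "bilinear br" "\<And>u. br u u = 0" using assms(1) by (auto simp: lie_algebra_def)
    show "bilinear g" "\<And>u v. g u v = g v u" "\<And>u. (\<forall>v. g u v = 0) \<Longrightarrow> u = 0"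
      using assms(2) by (auto simp: pseudo_euclidean_form_def)
    show "\<And>u v w. br (br u v) w = 0"
      using assms(3) by (auto simp: two_step_nilpotent_def center_def)
  qed
  show ?thesis by (rule main_pe[OF assms(4)])
qed

end
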